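(* Let $q$ be a prime power and $s$ an odd positive integer. Let $L=\mathbb{F}_{q^s}$, $F=\mathbb{F}_{q^{4s}}$, $G=F^*/L^*$, let $\pi:F^*\to G$ be the natural epimorphism, and let $D=\pi(\{x\in F: \mathrm{Tr}_{F/L}(x)=0\}\setminus\{0\})$, the Singer difference set in $G$ with parameters $\left(\frac{q^{4s}-1}{q^s-1},\frac{q^{3s}-1}{q^s-1},\frac{q^{2s}-1}{q^s-1}\right)$ coming from the trace zero hyperplane. Let $R$ be the subgroup of $G$ of order $\frac{q^4-1}{q-1}$. Then $D\cap R$ is a $\left(\frac{q^4-1}{q-1},\frac{q^3-1}{q-1},\frac{q^2-1}{q-1}\right)$ Singer difference set in $R$.
   Context: A $(v,k,\lambda)$-difference set in a finite group $G$ of order $v$ is a $k$-subset $D$ such that every non-identity element of $G$ is of the form $d_1d_2^{-1}$ with $d_1,d_2\in D$ in exactly $\lambda$ ways. For a finite field $K$ and an extension $E/K$ of finite degree, with $\pi:E^*\to E^*/K^*$ the natural map, the image $\pi(W\setminus\{0\})$ of a $K$-hyperplane $W$ of $E$ is a (Singer) difference set in the cyclic group $E^*/K^*$. $G$ is cyclic, so $R$ is its unique subgroup of that order. *)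

theory Defs
  imports Main "HOL-Algebra.Algebra" "HOL-Computational_Algebra.Primes"
begin

definition is_subfield :: "'a::field set \<Rightarrow> bool" where
  "is_subfield S \<longleftrightarrow> 0 \<in> S \<and> 1 \<in> S \<and>
     (\<forall>x\<in>S. \<forall>y\<in>S. x + y \<in> S \<and> x * y \<in> S) \<and>
     (\<forall>x\<in>S. - x \<in> S \<and> inverse x \<in> S)"

definition mult_grp :: "'a::field set \<Rightarrow> 'a monoid" where
  "mult_grp S = \<lparr>carrier = S - {0}, monoid.mult = (*), one = 1\<rparr>"

definition fin_trace :: "'a::field set \<Rightarrow> nat \<Rightarrow> 'a \<Rightarrow> 'a" where
  "fin_trace L d x = (\<Sum>i<d. x ^ (card L ^ i))"

definition is_subspace :: "'a::field set \<Rightarrow> 'a set \<Rightarrow> 'a set \<Rightarrow> bool" where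
  "is_subspace K E W \<longleftrightarrow> W \<subseteq> E \<and> 0 \<in> W \<and>
     (\<forall>x\<in>W. \<forall>y\<in>W. x + y \<in> W) \<and> (\<forall>c\<in>K. \<forall>x\<in>W. c * x \<in> W)"

text \<open>A K-hyperplane of E: a K-subspace of codimension one.\<close>
definition is_hyperplane :: "'a::field set \<Rightarrow> 'a set \<Rightarrow> 'a set \<Rightarrow> bool" where
  "is_hyperplane K E W \<longleftrightarrow> is_subspace K E W \<and> W \<noteq> E \<and>
     (\<exists>e\<in>E. E = {w + c * e | w c. w \<in> W \<and> c \<in> K})"

definition difference_set :: "('g, 'b) monoid_scheme \<Rightarrow> 'g set \<Rightarrow> nat \<Rightarrow> nat \<Rightarrow> nat \<Rightarrow> bool" where
  "difference_set H D v k lam \<longleftrightarrow> group H \<and> finite (carrier H) \<and>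
     card (carrier H) = v \<and> D \<subseteq> carrier H \<and> card D = k \<and>
     (\<forall>g\<in>carrier H. g \<noteq> \<one>\<^bsub>H\<^esub> \<longrightarrow>
        card {(d1, d2). d1 \<in> D \<and> d2 \<in> D \<and> d1 \<otimes>\<^bsub>H\<^esub> inv\<^bsub>H\<^esub> d2 = g} = lam)"

text \<open>Singer difference set in H: a difference set that is the image, under a group
  isomorphism E^*/K^* -> H, of pi(W - {0}) for a K-hyperplane W of a finite field
  extension E/K (here E, K range over subfields of the ambient field type).\<close>
definition singer_difference_set ::
  "('a::field set, 'b) monoid_scheme \<Rightarrow> 'a set set \<Rightarrow> nat \<Rightarrow> nat \<Rightarrow> nat \<Rightarrow> bool" where
  "singer_difference_set H S v k lam \<longleftrightarrow> difference_set H S v k lam \<and>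
     (\<exists>(K::'a set) (E::'a set) (W::'a set) (\<phi>::'a set \<Rightarrow> 'a set). is_subfield K \<and> is_subfield E \<and> K \<subseteq> E \<and> finite E \<and>
        is_hyperplane K E W \<and>
        \<phi> \<in> iso (mult_grp E Mod (K - {0})) H \<and>
        \<phi> ` ((\<lambda>x. (K - {0}) #>\<^bsub>mult_grp E\<^esub> x) ` (W - {0})) = S)"

end

theory Submission
  imports Defs "HOL-Number_Theory.Residues" "HOL-Computational_Algebra.Polynomial"
begin

lemma fiber_card:
  assumes "finite XX" "\<And>y. y \<in> f ` XX \<Longrightarrow> card {x\<in>XX. f x = y} = c"
  shows "card XX = c * card (f ` XX)"
proof -
  have "XX = (\<Union>y\<in>f`XX. {x\<in>XX. f x = y})" by auto
  hence "card XX = card (\<Union>y\<in>f`XX. {x\<in>XX. f x = y})" by simp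
  also have "\<dots> = (\<Sum>y\<in>f`XX. card {x\<in>XX. f x = y})"
    by (rule card_UN_disjoint) (use assms(1) in auto)
  also have "\<dots> = (\<Sum>y\<in>f`XX. c)" using assms(2) by simp
  finally show ?thesis by simp
qed

lemma pow_card_closed:
  fixes S :: "'a::field set"
  assumes "finite S" "0 \<notin> S" "\<And>a b. a \<in> S \<Longrightarrow> b \<in> S \<Longrightarrow> a * b \<in> S" "x \<in> S"
  shows "x ^ card S = 1"
proof -
  have x0: "x \<noteq> 0" using assms by auto
  have inj: "inj_on (\<lambda>y. x * y) S" using x0 by (auto simp: inj_on_def)
  have "(\<lambda>y. x * y) ` S = S"
    using assms inj by (intro card_subset_eq) (auto simp: card_image)
  hence "(\<Prod>y\<in>S. x * y) = (\<Prod>y\<in>S. y)"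
    using prod.reindex[OF inj, of id] by simp
  moreover have "(\<Prod>y\<in>S. x * y) = x ^ card S * (\<Prod>y\<in>S. y)"
    by (simp add: prod.distrib)
  moreover have "(\<Prod>y\<in>S. y) \<noteq> 0" using assms by auto
  ultimately show ?thesis by simp
qed

lemma roots_bound:
  fixes c :: "'a::field"
  assumes "k > 0"
  shows "card {x. x ^ k = c} \<le> k"
proof -
  define P where "P = monom (1::'a) k - [:c:]"
  have "coeff P k = 1" using assms by (cases k) (simp_all add: P_def)
  hence P0: "P \<noteq> 0" by auto
  have "degree P \<le> k" unfolding P_def
    using degree_diff_le[of "monom (1::'a) k" k "[:c:]"] degree_monom_le[of "1::'a" k] by simp
  moreover have "{x. x ^ k = c} = {x. poly P x = 0}" by (auto simp: P_def poly_monom)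
  ultimately show ?thesis using card_poly_roots_bound[OF P0] by simp
qed

lemma roots_bound2:
  fixes c :: "'a::field"
  assumes "k > 1"
  shows "card {x::'a. x ^ k = x} \<le> k"
proof -
  define P where "P = monom (1::'a) k - monom 1 1"
  have "coeff P k = 1" using assms by (simp add: P_def coeff_monom)
  hence P0: "P \<noteq> 0" by auto
  have "degree P \<le> k" unfolding P_def using assms
    by (meson degree_diff_le degree_monom_le le_trans less_imp_le)
  moreover have "{x. x ^ k = x} = {x. poly P x = 0}" by (auto simp: P_def poly_monom)
  ultimately show ?thesis using card_poly_roots_bound[OF P0] by simp
qed

lemma pow_card_minus1:
  fixes x :: "'a::{field,finite}"
  assumes "x \<noteq> 0"
  shows "x ^ (card (UNIV::'a set) - 1) = 1"
proof -
  have "card (UNIV - {0::'a}) = card (UNIV::'a set) - 1" by (simp add: card_Diff_singleton)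
  moreover have "x ^ card (UNIV - {0::'a}) = 1"
    by (rule pow_card_closed) (use assms in auto)
  ultimately show ?thesis by simp
qed

lemma count_roots_dvd:
  fixes dummy :: "'a::{field,finite}"
  assumes d: "d > 0" "d dvd card (UNIV::'a set) - 1"
  shows "card {x::'a. x ^ d = 1} = d"
proof -
  define N where "N = card (UNIV::'a set)"
  obtain m where m: "N - 1 = d * m" using d N_def by (auto elim: dvdE)
  have "card {0::'a, 1} \<le> N" unfolding N_def by (rule card_mono) auto
  hence N1: "N \<ge> 2" by simp
  hence mpos: "m > 0" using m by (cases m) auto
  define XX where "XX = (UNIV - {0::'a})"
  define K where "K = {x::'a. x ^ d = 1}"
  have cX: "card XX = N - 1" by (simp add: XX_def N_def card_Diff_singleton)
  have img: "(\<lambda>x. x ^ d) ` XX \<subseteq> {z. z ^ m = 1}"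
  proof
    fix z assume "z \<in> (\<lambda>x. x ^ d) ` XX"
    then obtain x where x: "x \<noteq> 0" "z = x ^ d" by (auto simp: XX_def)
    have "z ^ m = x ^ (d * m)" by (simp add: x power_mult)
    also have "\<dots> = x ^ (N - 1)" using m by simp
    also have "\<dots> = 1" using pow_card_minus1[OF x(1)] by (simp add: N_def)
    finally show "z \<in> {z. z ^ m = 1}" by simp
  qed
  have "card ((\<lambda>x. x ^ d) ` XX) \<le> m"
    using card_mono[OF _ img] roots_bound[OF mpos, of "1::'a"] by (meson finite le_trans)
  moreover have "card XX = card K * card ((\<lambda>x. x ^ d) ` XX)"
  proof (rule fiber_card)
    fix y assume "y \<in> (\<lambda>x. x ^ d) ` XX"
    then obtain z where z: "z \<noteq> 0" "y = z ^ d" by (auto simp: XX_def)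
    have "{x \<in> XX. x ^ d = y} = (\<lambda>u. z * u) ` K"
    proof (intro equalityI subsetI)
      fix x assume "x \<in> {x \<in> XX. x ^ d = y}"
      hence "x = z * (x / z)" "(x / z) ^ d = 1" using z by (auto simp: XX_def power_divide)
      thus "x \<in> (\<lambda>u. z * u) ` K" unfolding K_def by blast
    next
      fix x assume "x \<in> (\<lambda>u. z * u) ` K"
      then obtain u where "u ^ d = 1" "x = z * u" by (auto simp: K_def)
      thus "x \<in> {x \<in> XX. x ^ d = y}" using z d by (auto simp: XX_def power_mult_distrib power_0_left)
    qed
    moreover have "inj_on (\<lambda>u. z * u) K" using z by (auto simp: inj_on_def)
    ultimately show "card {x \<in> XX. x ^ d = y} = card K" by (simp add: card_image)
  qed (simp)
  ultimately have "d * m \<le> card K * m" using cX m by (metis mult.commute mult_le_mono2)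
  hence "d \<le> card K" using mpos by simp
  moreover have "card K \<le> d" unfolding K_def by (rule roots_bound[OF d(1)])
  ultimately show ?thesis by (simp add: K_def)
qed


lemma nat_pow_minus1_dvd: "(a::nat) - 1 dvd a ^ k - 1"
proof (induction k)
  case (Suc k)
  show ?case
  proof (cases "a = 0")
    case False
    hence a1: "a \<ge> 1" "a ^ k \<ge> 1" by auto
    hence "a * a ^ k \<ge> a" by simp
    moreover have "a * (a ^ k - 1) = a * a ^ k - a" by (simp add: diff_mult_distrib2)
    ultimately have "a ^ Suc k - 1 = a * (a ^ k - 1) + (a - 1)" using a1 by simp
    thus ?thesis using Suc by simp
  qed simp
qed simp

locale sing =
  fixes q s p n :: nat and L :: "'a::{field,finite} set" and R :: "'a set set"
  assumes pr: "Factorial_Ring.prime p" and npos: "n > 0" and qdef: "q = p ^ n"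
    and sodd: "odd s" and spos: "s > 0"
    and Lsub: "is_subfield L" and cardL: "card L = q ^ s"
    and cardF: "card (UNIV :: 'a set) = q ^ (4 * s)"
    and Rsub: "subgroup R (mult_grp (UNIV :: 'a set) Mod (L - {0}))"
    and cardR: "card R = (q ^ 4 - 1) div (q - 1)"
begin

lemma q2: "q \<ge> 2"
proof -
  have "p \<ge> 2" using pr by (rule prime_ge_2_nat)
  moreover have "p \<le> p ^ n" using npos \<open>p \<ge> 2\<close> by (intro self_le_power) auto
  ultimately show ?thesis using qdef by simp
qed

lemma CHAR_eq: "CHAR('a) = p"
proof -
  have pos: "CHAR('a) > 0" by (rule finite_imp_CHAR_pos) simp
  hence prc: "Factorial_Ring.prime CHAR('a)" by (rule prime_CHAR_semidom)
  have "CHAR('a) dvd p ^ (n * (4 * s))" using CHAR_dvd_CARD[where 'a='a] cardF qdef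
    by (simp add: power_mult)
  hence "CHAR('a) dvd p" using prc prime_dvd_power by blast
  thus ?thesis using prc pr by (simp add: primes_dvd_imp_eq)
qed

lemma frob_add: "((x::'a) + y) ^ (q ^ k) = x ^ (q ^ k) + y ^ (q ^ k)"
  by (rule freshmans_dream'[where n = "n * k"]) (use pr CHAR_eq qdef in \<open>auto simp: power_mult\<close>)

lemma frob_sum: "(sum (f::'b \<Rightarrow> 'a) A) ^ (q ^ k) = (\<Sum>i\<in>A. f i ^ (q ^ k))"
  by (rule freshmans_dream_sum'[where n = "n * k"]) (use pr CHAR_eq qdef in \<open>auto simp: power_mult\<close>)

lemma frob_neg: "(- (x::'a)) ^ (q ^ k) = - (x ^ (q ^ k))"
proof -
  have "(x + - x) ^ (q ^ k) = 0" using q2 by simp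
  hence "x ^ (q ^ k) + (- x) ^ (q ^ k) = 0" by (simp only: frob_add)
  thus ?thesis by (simp add: eq_neg_iff_add_eq_0 add.commute)
qed

lemma frob_diff: "((x::'a) - y) ^ (q ^ k) = x ^ (q ^ k) - y ^ (q ^ k)"
  using frob_add[of x "-y" k] frob_neg[of y k] by simp

definition Fix :: "nat \<Rightarrow> 'a set" where "Fix k = {x. x ^ (q ^ k) = x}"

lemma pow_iter: "(x::'a) ^ a = x \<Longrightarrow> x ^ (a ^ j) = x"
  by (induction j) (simp_all add: power_mult mult.commute[of a])

lemma Fix_mod: "x \<in> Fix a \<Longrightarrow> x ^ (q ^ b) = x ^ (q ^ (b mod a))"
proof -
  assume "x \<in> Fix a"
  hence x: "x ^ ((q ^ a) ^ (b div a)) = x" using pow_iter[of x "q^a" "b div a"] by (simp add: Fix_def)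
  have "q ^ b = q ^ (a * (b div a) + b mod a)" by simp
  also have "\<dots> = (q ^ a) ^ (b div a) * q ^ (b mod a)" by (simp only: power_add power_mult)
  finally have "q ^ b = (q ^ a) ^ (b div a) * q ^ (b mod a)" .
  thus ?thesis using x by (simp add: power_mult)
qed

lemma Fix_sub: assumes "x \<in> Fix a" "a dvd b" shows "x \<in> Fix b"
proof -
  have "x ^ (q ^ b) = x ^ (q ^ (b mod a))" by (rule Fix_mod[OF assms(1)])
  thus ?thesis using assms(2) by (simp add: Fix_def)
qed

lemma Fix_subfield: "is_subfield (Fix k)"
proof -
  have qk: "q ^ k > 0" using q2 by simp
  show ?thesis unfolding is_subfield_def Fix_def
    using qk by (simp add: frob_add frob_neg power_mult_distrib power_inverse power_0_left)
qed

lemma pow_N: "(x::'a) ^ (q ^ (4 * s)) = x"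
proof (cases "x = 0")
  case True thus ?thesis using q2 by (simp add: power_0_left)
next
  case False
  have N: "q ^ (4 * s) = (q ^ (4 * s) - 1) + 1" using q2 by simp
  have "x ^ (q ^ (4 * s) - 1) = 1" using pow_card_minus1[OF False] cardF by simp
  hence "x ^ ((q ^ (4 * s) - 1) + 1) = x" by (simp only: power_add) simp
  thus ?thesis by (subst N) assumption
qed

lemma card_Fix: assumes "k dvd 4 * s" "k > 0" shows "card (Fix k) = q ^ k"
proof -
  have "Fix k = insert 0 {x::'a. x ^ (q ^ k - 1) = 1}"
  proof (intro equalityI subsetI)
    fix x assume "x \<in> Fix k"
    hence "x ^ (q ^ k - 1 + 1) = x" using q2 by (simp add: Fix_def)
    thus "x \<in> insert 0 {x::'a. x ^ (q ^ k - 1) = 1}" by (auto simp: power_add)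
  next
    fix x assume "x \<in> insert 0 {x::'a. x ^ (q ^ k - 1) = 1}"
    moreover have e: "q ^ k = q ^ k - 1 + 1" using q2 by simp
    moreover have "(0::'a) ^ (q ^ k) = 0" using q2 by (simp add: power_0_left)
    moreover have "x ^ (q ^ k - 1) = 1 \<Longrightarrow> x ^ (q ^ k) = x"
      by (subst e) (simp only: power_add power_one_right mult_1)
    ultimately show "x \<in> Fix k" by (auto simp: Fix_def)
  qed
  moreover have "0 \<notin> {x::'a. x ^ (q ^ k - 1) = 1}"
  proof -
    have "1 < q ^ k" using q2 assms by (intro one_less_power) auto
    thus ?thesis by (simp add: power_0_left)
  qed
  moreover have "card {x::'a. x ^ (q ^ k - 1) = 1} = q ^ k - 1"
  proof (rule count_roots_dvd)
    have "1 < q ^ k" using q2 assms by (intro one_less_power) auto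
    thus "q ^ k - 1 > 0" by simp
    obtain j where j: "4 * s = k * j" using assms by (auto elim: dvdE)
    show "q ^ k - 1 dvd card (UNIV::'a set) - 1"
      using nat_pow_minus1_dvd[of "q ^ k" j] by (simp add: cardF j power_mult)
  qed
  ultimately show ?thesis using q2 by (simp add: Suc_diff_1)
qed

end


lemma sum4: "(\<Sum>i<(4::nat). f i) = f 0 + f 1 + f 2 + (f 3 :: 'a::comm_monoid_add)"
  by (simp add: eval_nat_numeral add.assoc)

context sing
begin

definition KK :: "'a set" where "KK = Fix 1"
definition EE :: "'a set" where "EE = Fix 4"

definition TrE :: "'a \<Rightarrow> 'a" where "TrE x = (\<Sum>i<4. x ^ (q ^ i))"

lemma TrE4: "TrE x = x + x ^ q + x ^ (q ^ 2) + x ^ (q ^ 3)"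
  by (simp add: TrE_def sum4)

lemma cardK: "card KK = q" using card_Fix[of 1] by (simp add: KK_def)
lemma cardE: "card EE = q ^ 4" using card_Fix[of 4] spos by (simp add: EE_def)

lemma K_E: "KK \<subseteq> EE" using Fix_sub[of _ 1 4] by (auto simp: KK_def EE_def)
lemma K_Fix: "x \<in> KK \<Longrightarrow> x ^ (q ^ i) = x" using Fix_sub[of x 1 i] by (simp add: Fix_def KK_def)
lemma E_Fix: "x \<in> EE \<Longrightarrow> x ^ (q ^ 4) = x" by (simp add: Fix_def EE_def)
lemma E_mod: "x \<in> EE \<Longrightarrow> x ^ (q ^ b) = x ^ (q ^ (b mod 4))" unfolding EE_def by (rule Fix_mod)

lemma L_eq: "L = Fix s"
proof -
  have fin: "finite L" by simp
  have sub: "L \<subseteq> Fix s"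
  proof
    fix l assume l: "l \<in> L"
    show "l \<in> Fix s"
    proof (cases "l = 0")
      case True thus ?thesis using q2 by (simp add: Fix_def power_0_left)
    next
      case False
      have l0: "l ^ card (L - {0}) = 1"
        by (rule pow_card_closed) (use False l Lsub in \<open>auto simp: is_subfield_def\<close>)
      have "card (L - {0}) = q ^ s - 1"
        using l Lsub cardL by (simp add: card_Diff_singleton is_subfield_def)
      hence l1: "l ^ (q ^ s - 1) = 1" using l0 by simp
      have e: "q ^ s = q ^ s - 1 + 1" using q2 by simp
      have "l ^ (q ^ s - 1 + 1) = l" by (simp only: power_add power_one_right l1 mult_1_left)
      moreover have "l ^ (q ^ s) = l ^ (q ^ s - 1 + 1)" by (rule arg_cong[where f="\<lambda>e. l ^ e"]) (rule e)
      ultimately have "l ^ (q ^ s) = l" by simp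
      thus ?thesis by (simp add: Fix_def)
    qed
  qed
  have "card (Fix s) = card L" using card_Fix[of s] spos cardL by simp
  thus ?thesis using sub by (intro card_subset_eq) auto
qed

lemma K_L: "KK \<subseteq> L" unfolding L_eq KK_def using Fix_sub[of _ 1 s] by auto

lemma EL: assumes "x \<in> EE" "x \<in> L" shows "x \<in> KK"
proof -
  have xs: "x ^ (q ^ s) = x" using assms(2) L_eq by (simp add: Fix_def)
  have m: "x ^ (q ^ s) = x ^ (q ^ (s mod 4))" by (rule E_mod[OF assms(1)])
  have "s mod 4 = 1 \<or> s mod 4 = 3" using sodd by presburger
  thus ?thesis
  proof
    assume "s mod 4 = 1" thus ?thesis using xs m by (simp add: Fix_def KK_def)
  next
    assume "s mod 4 = 3"
    hence x3: "x ^ (q ^ 3) = x" using xs m by simp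
    have "q ^ 3 * q = q ^ 4" by (simp add: eval_nat_numeral)
    hence "x = x ^ (q ^ 3 * q)" using assms(1) by (simp add: Fix_def EE_def)
    also have "\<dots> = x ^ q" by (simp add: power_mult x3)
    finally show ?thesis by (simp add: Fix_def KK_def)
  qed
qed

lemma TrF_eq: assumes "x \<in> EE" shows "fin_trace L 4 x = TrE x"
proof -
  have "fin_trace L 4 x = (\<Sum>i<4. x ^ (q ^ (s * i)))"
    by (simp add: fin_trace_def cardL power_mult)
  also have "\<dots> = (\<Sum>i<4. x ^ (q ^ ((s * i) mod 4)))"
    using E_mod[OF assms] by simp
  also have "\<dots> = x + x ^ (q ^ (s mod 4)) + x ^ (q ^ 2) + x ^ (q ^ ((s * 3) mod 4))"
  proof -
    have "(s * 2) mod 4 = 2" using sodd by presburger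
    thus ?thesis by (simp only: sum4) simp
  qed
  also have "\<dots> = TrE x"
  proof -
    have "(s mod 4 = 1 \<and> (s * 3) mod 4 = 3) \<or> (s mod 4 = 3 \<and> (s * 3) mod 4 = 1)"
      using sodd by presburger
    thus ?thesis unfolding TrE4 by (auto simp: add_ac)
  qed
  finally show ?thesis .
qed

lemma TrE_add: "TrE (x + y) = TrE x + TrE y"
  by (simp add: TrE_def frob_add sum.distrib)

lemma TrE_diff: "TrE (x - y) = TrE x - TrE y"
  by (simp add: TrE_def frob_diff sum_subtractf)

lemma TrE_smul: "c \<in> KK \<Longrightarrow> TrE (c * x) = c * TrE x"
  by (simp add: TrE_def power_mult_distrib K_Fix sum_distrib_left)

lemma TrE_K: assumes "x \<in> EE" shows "TrE x \<in> KK"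
proof -
  have "(TrE x) ^ (q ^ 1) = (\<Sum>i<4. (x ^ (q ^ i)) ^ (q ^ 1))"
    unfolding TrE_def by (rule frob_sum)
  also have "\<dots> = x ^ q + x ^ (q ^ 2) + x ^ (q ^ 3) + x ^ (q ^ 4)"
    by (simp add: sum4 power_mult[symmetric] power_Suc2[symmetric] eval_nat_numeral)
  also have "\<dots> = TrE x" using E_Fix[OF assms] by (simp add: TrE4 add_ac)
  finally show ?thesis by (simp add: Fix_def KK_def)
qed

lemma TrE_nonzero: "\<exists>e \<in> EE. TrE e \<noteq> 0"
proof (rule ccontr)
  assume "\<not> ?thesis"
  hence sub: "EE \<subseteq> {x. TrE x = 0}" by auto
  define P where "P = monom (1::'a) 1 + monom 1 q + monom 1 (q ^ 2) + monom 1 (q ^ 3)"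
  have ne: "1 \<noteq> q ^ 3" "q \<noteq> q ^ 3" "q ^ 2 \<noteq> q ^ 3"
  proof -
    have "q ^ 1 < q ^ 2" "q ^ 2 < q ^ 3" "q ^ 0 < q ^ 3"
      using q2 power_strict_increasing[of 1 2 q] power_strict_increasing[of 2 3 q]
        power_strict_increasing[of 0 3 q] by auto
    thus "1 \<noteq> q ^ 3" "q \<noteq> q ^ 3" "q ^ 2 \<noteq> q ^ 3" by auto
  qed
  have "coeff P (q ^ 3) = 1" using ne by (simp add: P_def coeff_monom)
  hence P0: "P \<noteq> 0" by auto
  have "degree P \<le> q ^ 3"
  proof -
    have "q ^ 0 \<le> q ^ 3" "q ^ 1 \<le> q ^ 3" "q ^ 2 \<le> q ^ 3"
      using q2 power_increasing[of 0 3 q] power_increasing[of 1 3 q] power_increasing[of 2 3 q] by auto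
    thus ?thesis unfolding P_def
      by (intro degree_add_le degree_monom_le[THEN le_trans]) auto
  qed
  moreover have "{x. TrE x = 0} = {x. poly P x = 0}" by (auto simp: P_def poly_monom TrE4)
  ultimately have "card {x. TrE x = 0} \<le> q ^ 3" using card_poly_roots_bound[OF P0] by simp
  moreover have "card (EE) \<le> card {x. TrE x = 0}" using sub by (intro card_mono) auto
  moreover have "q ^ 3 < q ^ 4" using q2 power_strict_increasing[of 3 4 q] by auto
  ultimately show False using cardE by simp
qed

end


context sing
begin

lemma sfK: "is_subfield KK" and sfE: "is_subfield EE"
  unfolding KK_def EE_def by (rule Fix_subfield)+

lemma sf_0: "is_subfield S \<Longrightarrow> 0 \<in> S" and sf_1: "is_subfield S \<Longrightarrow> 1 \<in> S"
  and sf_add: "is_subfield S \<Longrightarrow> x \<in> S \<Longrightarrow> y \<in> S \<Longrightarrow> x + y \<in> S"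
  and sf_mult: "is_subfield S \<Longrightarrow> x \<in> S \<Longrightarrow> y \<in> S \<Longrightarrow> x * y \<in> S"
  and sf_neg: "is_subfield S \<Longrightarrow> x \<in> S \<Longrightarrow> - x \<in> S"
  and sf_inv: "is_subfield S \<Longrightarrow> x \<in> S \<Longrightarrow> inverse x \<in> S"
  unfolding is_subfield_def by auto

lemma sf_diff: "is_subfield S \<Longrightarrow> x \<in> S \<Longrightarrow> y \<in> S \<Longrightarrow> x - y \<in> S"
  using sf_add[of S x "- y"] sf_neg[of S y] by simp

lemmas Fix_0 = sf_0[OF sfK] sf_0[OF sfE]
lemmas Fix_1 = sf_1[OF sfK] sf_1[OF sfE]
lemmas Fix_add = sf_add[OF sfK] sf_add[OF sfE]
lemmas Fix_mult = sf_mult[OF sfK] sf_mult[OF sfE]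
lemmas Fix_inv = sf_inv[OF sfK] sf_inv[OF sfE]
lemmas Fix_diff = sf_diff[OF sfK] sf_diff[OF sfE]

lemma TrE_0: "TrE 0 = 0" using TrE_diff[of 0 0] by simp

lemma lin_count:
  fixes A :: "'a set" and f :: "'a \<Rightarrow> 'a"
  assumes AE: "A \<subseteq> EE"
    and Aadd: "\<And>x y. x \<in> A \<Longrightarrow> y \<in> A \<Longrightarrow> x + y \<in> A"
    and Adiff: "\<And>x y. x \<in> A \<Longrightarrow> y \<in> A \<Longrightarrow> x - y \<in> A"
    and Asm: "\<And>c x. c \<in> KK \<Longrightarrow> x \<in> A \<Longrightarrow> c * x \<in> A"
    and fadd: "\<And>x y. x \<in> A \<Longrightarrow> y \<in> A \<Longrightarrow> f (x + y) = f x + f y"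
    and fsm: "\<And>c x. c \<in> KK \<Longrightarrow> x \<in> A \<Longrightarrow> f (c * x) = c * f x"
    and fK: "\<And>x. x \<in> A \<Longrightarrow> f x \<in> KK"
    and nz: "\<exists>a\<in>A. f a \<noteq> 0"
  shows "card A = card {x\<in>A. f x = 0} * q"
proof -
  obtain b where b: "b \<in> A" "f b \<noteq> 0" using nz by auto
  define a where "a = inverse (f b) * b"
  have a: "a \<in> A" "f a = 1" using b fK[OF b(1)] Fix_inv(1)[of "f b"]
    by (auto simp: a_def Asm fsm)
  have fdiff: "f (x - y) = f x - f y" if "x \<in> A" "y \<in> A" for x y
    using fadd[OF Adiff[OF that] that(2)] by (simp add: algebra_simps)
  have img: "f ` A = KK"
  proof (intro equalityI subsetI)
    fix c assume "c \<in> f ` A" thus "c \<in> KK" using fK by auto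
  next
    fix c assume c: "c \<in> KK"
    have "f (c * a) = c" using a c fsm by simp
    moreover have "c * a \<in> A" using a c Asm by simp
    ultimately show "c \<in> f ` A" by force
  qed
  have "card A = card {x\<in>A. f x = 0} * card (f ` A)"
  proof (rule fiber_card)
    show "finite A" by simp
  next
    fix c assume "c \<in> f ` A"
    hence c: "c \<in> KK" using img by simp
    have ca: "c * a \<in> A" "f (c * a) = c" using a c Asm fsm by auto
    have "{x \<in> A. f x = c} = (\<lambda>z. z + c * a) ` {x\<in>A. f x = 0}"
    proof (intro equalityI subsetI)
      fix x assume x: "x \<in> {x \<in> A. f x = c}"
      hence "x - c * a \<in> {x\<in>A. f x = 0}" using ca Adiff fdiff by auto
      moreover have "x = (x - c * a) + c * a" by simp
      ultimately show "x \<in> (\<lambda>z. z + c * a) ` {x\<in>A. f x = 0}" by blast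
    next
      fix x assume "x \<in> (\<lambda>z. z + c * a) ` {x\<in>A. f x = 0}"
      then obtain z where z: "z \<in> A" "f z = 0" "x = z + c * a" by auto
      thus "x \<in> {x \<in> A. f x = c}" using ca Aadd fadd by auto
    qed
    moreover have "inj_on (\<lambda>z. z + c * a) {x\<in>A. f x = 0}" by (auto simp: inj_on_def)
    ultimately show "card {x \<in> A. f x = c} = card {x\<in>A. f x = 0}" by (simp add: card_image)
  qed
  thus ?thesis using img cardK by simp
qed

definition W :: "'a set" where "W = {x \<in> EE. TrE x = 0}"

lemma W_E: "W \<subseteq> EE" by (auto simp: W_def)
lemma W_0: "0 \<in> W" by (simp add: W_def Fix_0 TrE_0)
lemma W_add: "x \<in> W \<Longrightarrow> y \<in> W \<Longrightarrow> x + y \<in> W" by (simp add: W_def Fix_add TrE_add)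
lemma W_diff: "x \<in> W \<Longrightarrow> y \<in> W \<Longrightarrow> x - y \<in> W" by (simp add: W_def Fix_diff TrE_diff)
lemma W_sm: "c \<in> KK \<Longrightarrow> x \<in> W \<Longrightarrow> c * x \<in> W"
  using K_E by (auto simp: W_def Fix_mult TrE_smul)

definition e1 :: 'a where "e1 = (SOME e. e \<in> EE \<and> TrE e = 1)"

lemma e1: "e1 \<in> EE" "TrE e1 = 1"
proof -
  obtain e where e: "e \<in> EE" "TrE e \<noteq> 0" using TrE_nonzero by auto
  have "inverse (TrE e) \<in> KK" using TrE_K[OF e(1)] by (rule Fix_inv)
  hence "inverse (TrE e) * e \<in> EE \<and> TrE (inverse (TrE e) * e) = 1"
    using e K_E by (auto simp: TrE_smul Fix_mult)
  hence "\<exists>e. e \<in> EE \<and> TrE e = 1" by blast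
  from someI_ex[OF this] show "e1 \<in> EE" "TrE e1 = 1" by (auto simp: e1_def)
qed

lemma cardW: "card W = q ^ 3"
proof -
  have "card (EE) = card {x \<in> EE. TrE x = 0} * q"
    by (rule lin_count)
      (use e1 in \<open>auto simp: Fix_add Fix_diff TrE_add TrE_smul TrE_K intro: Fix_mult subsetD[OF K_E] bexI[of _ e1]\<close>)
  hence "q ^ 4 = card W * q" using cardE by (simp add: W_def)
  hence "q ^ 3 * q = card W * q" by (simp add: eval_nat_numeral mult_ac)
  thus ?thesis using q2 by simp
qed

lemma hyper: "is_hyperplane (KK) (EE) W"
  unfolding is_hyperplane_def is_subspace_def
proof (intro conjI ballI bexI[of _ e1])
  show "W \<subseteq> EE" by (rule W_E)
  show "0 \<in> W" by (rule W_0)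
  show "x + y \<in> W" if "x \<in> W" "y \<in> W" for x y using that by (rule W_add)
  show "c * x \<in> W" if "c \<in> KK" "x \<in> W" for c x using that by (rule W_sm)
  show "W \<noteq> EE"
  proof
    assume "W = EE" hence "e1 \<in> W" using e1 by simp
    thus False using e1 by (simp add: W_def)
  qed
  show "e1 \<in> EE" by (rule e1)
  show "EE = {w + c * e1 |w c. w \<in> W \<and> c \<in> KK}"
  proof (intro equalityI subsetI)
    fix x assume x: "x \<in> EE"
    have "x - TrE x * e1 \<in> W" using x e1 TrE_K[OF x] K_E
      by (auto simp: W_def TrE_diff TrE_smul Fix_diff Fix_mult)
    moreover have "x = (x - TrE x * e1) + TrE x * e1" by simp
    ultimately show "x \<in> {w + c * e1 |w c. w \<in> W \<and> c \<in> KK}" using TrE_K[OF x] by blast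
  next
    fix x assume "x \<in> {w + c * e1 |w c. w \<in> W \<and> c \<in> KK}"
    then obtain w c where "x = w + c * e1" "w \<in> W" "c \<in> KK" by auto
    thus "x \<in> EE" using e1 W_E K_E by (auto intro!: Fix_add Fix_mult)
  qed
qed

lemma nondeg:
  assumes y: "y \<in> EE" "y \<notin> KK"
  shows "\<exists>w\<in>W. TrE (y * w) \<noteq> 0"
proof (rule ccontr)
  assume "\<not> ?thesis"
  hence H: "\<And>w. w \<in> W \<Longrightarrow> TrE (y * w) = 0" by auto
  define c where "c = TrE (y * e1)"
  have cK: "c \<in> KK" unfolding c_def using y e1 by (intro TrE_K Fix_mult)
  have key: "TrE ((y - c) * x) = 0" if x: "x \<in> EE" for x
  proof -
    have "x - TrE x * e1 \<in> W" using x e1 TrE_K[OF x] K_E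
      by (auto simp: W_def TrE_diff TrE_smul Fix_diff Fix_mult)
    hence "TrE (y * (x - TrE x * e1)) = 0" by (rule H)
    hence "TrE (y * x) = TrE x * c"
      using TrE_K[OF x] by (simp add: right_diff_distrib TrE_diff c_def mult.left_commute[of y] TrE_smul)
    moreover have "(y - c) * x = y * x - c * x" by (simp add: algebra_simps)
    ultimately show ?thesis using cK by (simp add: TrE_diff TrE_smul)
  qed
  have yc: "y - c \<noteq> 0" using y cK by auto
  have "inverse (y - c) * e1 \<in> EE" using y cK K_E e1
    by (intro Fix_mult Fix_inv Fix_diff) auto
  hence "TrE ((y - c) * (inverse (y - c) * e1)) = 0" by (rule key)
  thus False using yc e1 by (simp add: mult.assoc[symmetric])
qed

lemma cardWW:
  assumes y: "y \<in> EE" "y \<notin> KK"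
  shows "card {x \<in> W. TrE (y * x) = 0} = q ^ 2"
proof -
  have "card W = card {x \<in> W. TrE (y * x) = 0} * q"
    by (rule lin_count)
      (use y nondeg[OF y] W_E in \<open>auto simp: W_add W_diff W_sm distrib_left TrE_add
          mult.left_commute[of y] TrE_smul intro!: TrE_K Fix_mult\<close>)
  hence "q ^ 2 * q = card {x \<in> W. TrE (y * x) = 0} * q" using cardW
    by (simp add: eval_nat_numeral mult_ac)
  thus ?thesis using q2 by simp
qed

end


lemma mult_grp_simps [simp]:
  "carrier (mult_grp S) = S - {0}" "x \<otimes>\<^bsub>mult_grp S\<^esub> y = x * y" "\<one>\<^bsub>mult_grp S\<^esub> = 1"
  by (simp_all add: mult_grp_def)

lemma mult_grp_comm: "is_subfield (S::'a::field set) \<Longrightarrow> comm_group (mult_grp S)"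
proof (rule comm_groupI)
  fix x assume S: "is_subfield S" and x: "x \<in> carrier (mult_grp S)"
  show "\<exists>y\<in>carrier (mult_grp S). y \<otimes>\<^bsub>mult_grp S\<^esub> x = \<one>\<^bsub>mult_grp S\<^esub>"
    using S x by (intro bexI[of _ "inverse x"]) (auto simp: is_subfield_def)
qed (auto simp: is_subfield_def mult.assoc mult.commute)

lemma mult_grp_inv: "is_subfield (S::'a::field set) \<Longrightarrow> x \<in> S - {0} \<Longrightarrow>
    inv\<^bsub>mult_grp S\<^esub> x = inverse x"
  by (rule group.inv_equality[OF comm_group.axioms(2)[OF mult_grp_comm]])
    (auto simp: is_subfield_def)

lemma mult_grp_pow: "x [^]\<^bsub>mult_grp S\<^esub> (k::nat) = x ^ k"
  by (induction k) (simp_all add: mult.commute)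

lemma mult_grp_subgroup: "is_subfield (S::'a::field set) \<Longrightarrow> is_subfield T \<Longrightarrow> T \<subseteq> S \<Longrightarrow>
    subgroup (T - {0}) (mult_grp S)"
  by (rule subgroup.intro) (auto simp: is_subfield_def mult_grp_inv)

lemma mult_grp_normal: "is_subfield (S::'a::field set) \<Longrightarrow> is_subfield T \<Longrightarrow> T \<subseteq> S \<Longrightarrow>
    (T - {0}) \<lhd> mult_grp S"
  by (rule comm_group.subgroup_imp_normal[OF mult_grp_comm mult_grp_subgroup])

lemma rcos_mg: "H #>\<^bsub>mult_grp S\<^esub> a = (\<lambda>h. h * a) ` H"
  by (auto simp: r_coset_def)

lemma rcos_eq_iff:
  fixes x y :: "'a::field"
  assumes T: "is_subfield T" and xy: "x \<noteq> 0" "y \<noteq> 0"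
  shows "(T - {0}) #>\<^bsub>mult_grp S\<^esub> x = (T - {0}) #>\<^bsub>mult_grp S'\<^esub> y \<longleftrightarrow> x * inverse y \<in> T"
proof
  assume eq: "(T - {0}) #>\<^bsub>mult_grp S\<^esub> x = (T - {0}) #>\<^bsub>mult_grp S'\<^esub> y"
  have "x \<in> (T - {0}) #>\<^bsub>mult_grp S\<^esub> x" using T xy by (auto simp: rcos_mg is_subfield_def image_iff
      intro!: bexI[of _ 1])
  then obtain h where "h \<in> T" "x = h * y" using eq by (auto simp: rcos_mg)
  thus "x * inverse y \<in> T" using xy by (simp add: mult.assoc)
next
  assume t: "x * inverse y \<in> T"
  define t where "t = x * inverse y"
  have t0: "t \<noteq> 0" "t \<in> T" "x = t * y" using xy t by (auto simp: t_def)
  show "(T - {0}) #>\<^bsub>mult_grp S\<^esub> x = (T - {0}) #>\<^bsub>mult_grp S'\<^esub> y"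
  proof (intro equalityI subsetI)
    fix z assume "z \<in> (T - {0}) #>\<^bsub>mult_grp S\<^esub> x"
    then obtain h where h: "h \<in> T - {0}" "z = h * x" by (auto simp: rcos_mg)
    hence "z = (h * t) * y" "h * t \<in> T - {0}" using t0 T by (auto simp: is_subfield_def mult.assoc)
    thus "z \<in> (T - {0}) #>\<^bsub>mult_grp S'\<^esub> y" by (auto simp: rcos_mg)
  next
    fix z assume "z \<in> (T - {0}) #>\<^bsub>mult_grp S'\<^esub> y"
    then obtain h where h: "h \<in> T - {0}" "z = h * y" by (auto simp: rcos_mg)
    hence "z = (h * inverse t) * x" "h * inverse t \<in> T - {0}" using t0 T
      by (auto simp: is_subfield_def mult.assoc)
    thus "z \<in> (T - {0}) #>\<^bsub>mult_grp S\<^esub> x" by (auto simp: rcos_mg)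
  qed
qed



context sing
begin

abbreviation "Ls \<equiv> L - {0}"
abbreviation "MG \<equiv> mult_grp (UNIV :: 'a set)"
abbreviation "GG \<equiv> MG Mod Ls"
definition pi :: "'a \<Rightarrow> 'a set" where "pi x = Ls #>\<^bsub>MG\<^esub> x"
definition mm :: nat where "mm = (q ^ 4 - 1) div (q - 1)"

lemma UNIV_sf: "is_subfield (UNIV :: 'a set)" by (simp add: is_subfield_def)

lemma Ls_normal: "Ls \<lhd> MG" by (rule mult_grp_normal[OF UNIV_sf Lsub]) simp

lemma grpG: "group GG" by (rule normal.factorgroup_is_group[OF Ls_normal])

lemma carrier_G: "carrier GG = pi ` (UNIV - {0})"
  by (auto simp: FactGroup_def RCOSETS_def pi_def)

lemma pi_eq: "x \<noteq> 0 \<Longrightarrow> y \<noteq> 0 \<Longrightarrow> pi x = pi y \<longleftrightarrow> x * inverse y \<in> L"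
  unfolding pi_def by (rule rcos_eq_iff[OF Lsub])

lemma pi_mult: "x \<noteq> 0 \<Longrightarrow> y \<noteq> 0 \<Longrightarrow> pi x \<otimes>\<^bsub>GG\<^esub> pi y = pi (x * y)"
  using normal.rcos_sum[OF Ls_normal, of x y] by (simp add: pi_def FactGroup_def)

lemma one_G: "\<one>\<^bsub>GG\<^esub> = pi 1"
  by (simp add: pi_def FactGroup_def rcos_mg)

lemma pi1: "pi 1 = Ls" by (simp add: pi_def rcos_mg)

lemma pi_pow: "x \<noteq> 0 \<Longrightarrow> pi x [^]\<^bsub>GG\<^esub> (k::nat) = pi (x ^ k)"
proof -
  assume x: "x \<noteq> 0"
  have "(\<lambda>a. Ls #>\<^bsub>MG\<^esub> a) (x [^]\<^bsub>MG\<^esub> k) = ((\<lambda>a. Ls #>\<^bsub>MG\<^esub> a) x) [^]\<^bsub>GG\<^esub> k"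
    by (rule hom_nat_pow[OF normal.r_coset_hom_Mod[OF Ls_normal]])
      (use x grpG comm_group.axioms(2)[OF mult_grp_comm[OF UNIV_sf]] in auto)
  thus ?thesis by (simp add: pi_def mult_grp_pow)
qed

lemma Lpow: assumes "l \<in> L" "l \<noteq> 0" shows "l ^ (q ^ s - 1) = 1"
proof -
  have "l ^ card (L - {0}) = 1"
    by (rule pow_card_closed) (use assms Lsub in \<open>auto simp: is_subfield_def\<close>)
  moreover have "card (L - {0}) = q ^ s - 1"
    using assms Lsub cardL by (simp add: card_Diff_singleton is_subfield_def)
  ultimately show ?thesis by simp
qed

lemma qdvd: "q - 1 dvd q ^ k - 1" by (rule nat_pow_minus1_dvd)

lemma mm_mult: "mm * (q - 1) = q ^ 4 - 1" using qdvd[of 4] by (simp add: mm_def)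

lemma mm_pos: "mm > 0"
proof -
  have "q ^ 1 < q ^ 4" using q2 power_strict_increasing[of 1 4 q] by auto
  hence "q ^ 4 - 1 > 0" using q2 by simp
  thus ?thesis using mm_mult by (cases mm) auto
qed

lemma pi_fiber_E:
  assumes x: "x \<in> EE" "x \<noteq> 0"
  shows "{x' \<in> EE - {0}. pi x' = pi x} = (\<lambda>k. k * x) ` (KK - {0})"
proof (intro equalityI subsetI)
  fix x' assume x': "x' \<in> {x' \<in> EE - {0}. pi x' = pi x}"
  hence "x' * inverse x \<in> L" using x pi_eq by auto
  moreover have "x' * inverse x \<in> EE" using x x' by (auto intro!: Fix_mult Fix_inv)
  ultimately have "x' * inverse x \<in> KK - {0}" using EL x x' by auto
  moreover have "x' = (x' * inverse x) * x" using x by simp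
  ultimately show "x' \<in> (\<lambda>k. k * x) ` (KK - {0})" by blast
next
  fix x' assume "x' \<in> (\<lambda>k. k * x) ` (KK - {0})"
  then obtain k where k: "k \<in> KK" "k \<noteq> 0" "x' = k * x" by auto
  hence "x' \<in> EE - {0}" using x K_E by (auto intro!: Fix_mult)
  moreover have "pi x' = pi x" using k x K_L by (subst pi_eq) (auto simp: mult.assoc)
  ultimately show "x' \<in> {x' \<in> EE - {0}. pi x' = pi x}" by simp
qed

lemma card_Rimg: "card (pi ` (EE - {0})) = mm"
proof -
  have "card (EE - {0}) = (q - 1) * card (pi ` (EE - {0}))"
  proof (rule fiber_card)
    fix y assume "y \<in> pi ` (EE - {0})"
    then obtain x where x: "x \<in> EE" "x \<noteq> 0" "y = pi x" by auto
    have "card {x' \<in> EE - {0}. pi x' = y} = card ((\<lambda>k. k * x) ` (KK - {0}))"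
      using pi_fiber_E[OF x(1,2)] x(3) by simp
    also have "\<dots> = card (KK - {0})" using x by (intro card_image) (auto simp: inj_on_def)
    also have "\<dots> = q - 1" using cardK by (simp add: card_Diff_singleton Fix_0)
    finally show "card {x' \<in> EE - {0}. pi x' = y} = q - 1" .
  qed simp
  moreover have "card (EE - {0}) = q ^ 4 - 1" using cardE by (simp add: card_Diff_singleton Fix_0)
  ultimately have e0: "q ^ 4 - 1 = (q - 1) * card (pi ` (EE - {0}))" by simp
  have e: "mm * (q - 1) = card (pi ` (EE - {0})) * (q - 1)" using mm_mult e0 by (metis mult.commute)
  have "q - 1 \<noteq> 0" using q2 by simp
  thus ?thesis using e by simp
qed

definition YY where "YY = pi ` {x. x ^ (mm * (q ^ s - 1)) = 1}"

lemma card_YY: "card YY \<le> mm"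
proof -
  define X0 where "X0 = {x::'a. x ^ (mm * (q ^ s - 1)) = 1}"
  have Qpos: "q ^ s - 1 > 0"
  proof -
    have "q ^ 0 < q ^ s" using q2 spos power_strict_increasing[of 0 s q] by auto
    thus ?thesis by simp
  qed
  have pos: "mm * (q ^ s - 1) > 0" using mm_pos Qpos by simp
  have X0nz: "x \<in> X0 \<Longrightarrow> x \<noteq> 0" for x using pos by (auto simp: X0_def power_0_left)
  have "card X0 = (q ^ s - 1) * card (pi ` X0)"
  proof (rule fiber_card)
    fix y assume "y \<in> pi ` X0"
    then obtain x where x: "x \<in> X0" "y = pi x" by auto
    have x0: "x \<noteq> 0" using X0nz x by simp
    have "{x' \<in> X0. pi x' = y} = (\<lambda>l. l * x) ` Ls"
    proof (intro equalityI subsetI)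
      fix x' assume x': "x' \<in> {x' \<in> X0. pi x' = y}"
      hence "x' * inverse x \<in> L" "x' * inverse x \<noteq> 0" using x x0 X0nz pi_eq by auto
      moreover have "x' = (x' * inverse x) * x" using x0 by simp
      ultimately show "x' \<in> (\<lambda>l. l * x) ` Ls" by blast
    next
      fix x' assume "x' \<in> (\<lambda>l. l * x) ` Ls"
      then obtain l where l: "l \<in> L" "l \<noteq> 0" "x' = l * x" by auto
      have "l ^ (mm * (q ^ s - 1)) = 1" using Lpow[OF l(1,2)]
        by (simp add: power_mult mult.commute[of mm])
      hence "x' \<in> X0" using x l by (auto simp: X0_def power_mult_distrib)
      moreover have "pi x' = pi x" using l x0 by (subst pi_eq) (auto simp: mult.assoc)
      ultimately show "x' \<in> {x' \<in> X0. pi x' = y}" using x by simp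
    qed
    moreover have "inj_on (\<lambda>l. l * x) Ls" using x0 by (auto simp: inj_on_def)
    moreover have "card Ls = q ^ s - 1" using cardL Lsub by (simp add: card_Diff_singleton is_subfield_def)
    ultimately show "card {x' \<in> X0. pi x' = y} = q ^ s - 1" by (simp add: card_image)
  qed simp
  moreover have "card X0 \<le> mm * (q ^ s - 1)" unfolding X0_def by (rule roots_bound[OF pos])
  ultimately have "card (pi ` X0) * (q ^ s - 1) \<le> mm * (q ^ s - 1)" by (simp add: mult.commute)
  thus ?thesis using Qpos by (simp add: YY_def X0_def)
qed

lemma Rimg_YY: "pi ` (EE - {0}) \<subseteq> YY"
proof
  fix g assume "g \<in> pi ` (EE - {0})"
  then obtain x where x: "x \<in> EE" "x \<noteq> 0" "g = pi x" by auto
  have "x ^ (q ^ 4 - 1 + 1) = x" using E_Fix[OF x(1)] q2 by simp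
  hence x1: "x ^ (q ^ 4 - 1) = 1" using x(2) by (simp add: power_add)
  obtain j where j: "q ^ s - 1 = (q - 1) * j" using qdvd[of s] by (auto elim: dvdE)
  have "mm * (q ^ s - 1) = (q ^ 4 - 1) * j" using mm_mult j by (metis mult.assoc)
  hence "x ^ (mm * (q ^ s - 1)) = 1" using x1 by (simp add: power_mult)
  thus "g \<in> YY" using x by (auto simp: YY_def)
qed

lemma R_YY: "R \<subseteq> YY"
proof
  fix g assume g: "g \<in> R"
  have gG: "g \<in> carrier GG" using g Rsub subgroup.subset by blast
  then obtain x where x: "x \<noteq> 0" "g = pi x" using carrier_G by auto
  have grpR: "group (GG\<lparr>carrier := R\<rparr>)" by (rule subgroup.subgroup_is_group[OF Rsub grpG])
  have "g [^]\<^bsub>GG\<lparr>carrier := R\<rparr>\<^esub> card R = \<one>\<^bsub>GG\<lparr>carrier := R\<rparr>\<^esub>"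
    using g group.pow_order_eq_1[OF grpR, of g] by (simp add: Coset.order_def)
  hence "g [^]\<^bsub>GG\<^esub> mm = \<one>\<^bsub>GG\<^esub>"
    using monoid.nat_pow_consistent[OF group.is_monoid[OF grpG], of g "card R" R]
    by (simp add: cardR mm_def)
  hence "pi (x ^ mm) = pi 1" using x by (simp add: pi_pow pi1)
  hence "x ^ mm \<in> L" using x by (subst (asm) pi_eq) auto
  hence "(x ^ mm) ^ (q ^ s - 1) = 1" using x by (intro Lpow) auto
  thus "g \<in> YY" using x by (auto simp: YY_def power_mult)
qed

lemma R_eq: "R = pi ` (EE - {0})"
proof -
  have fin: "finite YY" by (simp add: YY_def)
  have "card R \<le> card YY" using R_YY fin by (rule card_mono[rotated])
  hence "R = YY" using R_YY card_YY cardR fin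
    by (intro card_subset_eq) (auto simp: mm_def)
  moreover have "card (pi ` (EE - {0})) \<le> card YY" using Rimg_YY fin by (rule card_mono[rotated])
  hence "pi ` (EE - {0}) = YY" using Rimg_YY card_YY card_Rimg fin
    by (intro card_subset_eq) auto
  ultimately show ?thesis by simp
qed

end


context sing
begin

lemma TrF_smul:
  assumes l: "l \<in> L" shows "fin_trace L 4 (l * x) = l * fin_trace L 4 x"
proof -
  have l1: "l ^ (q ^ s) = l" using l L_eq by (simp add: Fix_def)
  have "l ^ ((q ^ s) ^ i) = l" for i by (rule pow_iter[OF l1])
  thus ?thesis by (simp add: fin_trace_def cardL power_mult_distrib sum_distrib_left)
qed

lemma pi_KK: "y \<in> KK \<Longrightarrow> y \<noteq> 0 \<Longrightarrow> pi y = pi 1"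
  using K_L by (subst pi_eq) auto

lemma card_pi_img:
  assumes XS: "XS \<subseteq> EE - {0}" "\<And>k x. k \<in> KK - {0} \<Longrightarrow> x \<in> XS \<Longrightarrow> k * x \<in> XS"
  shows "card XS = (q - 1) * card (pi ` XS)"
proof (rule fiber_card)
  fix y assume "y \<in> pi ` XS"
  then obtain x where x: "x \<in> XS" "y = pi x" by auto
  have xE: "x \<in> EE" "x \<noteq> 0" using XS x by auto
  have "{x' \<in> XS. pi x' = y} = {x' \<in> EE - {0}. pi x' = pi x}"
  proof (intro equalityI subsetI)
    fix x' assume "x' \<in> {x' \<in> EE - {0}. pi x' = pi x}"
    hence "x' \<in> (\<lambda>k. k * x) ` (KK - {0})" using pi_fiber_E[OF xE] by blast
    thus "x' \<in> {x' \<in> XS. pi x' = y}" using XS(2) x \<open>x' \<in> {x' \<in> EE - {0}. pi x' = pi x}\<close> by auto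
  qed (use XS x in auto)
  also have "\<dots> = (\<lambda>k. k * x) ` (KK - {0})" by (rule pi_fiber_E[OF xE])
  finally have "card {x' \<in> XS. pi x' = y} = card ((\<lambda>k. k * x) ` (KK - {0}))" by simp
  also have "\<dots> = card (KK - {0})" using xE by (intro card_image) (auto simp: inj_on_def)
  also have "\<dots> = q - 1" using cardK by (simp add: card_Diff_singleton Fix_0)
  finally show "card {x' \<in> XS. pi x' = y} = q - 1" .
qed simp

lemma S_eq: "pi ` ({x. fin_trace L 4 x = 0} - {0}) \<inter> R = pi ` (W - {0})"
proof (intro equalityI subsetI)
  fix g assume g: "g \<in> pi ` ({x. fin_trace L 4 x = 0} - {0}) \<inter> R"
  then obtain y where y: "fin_trace L 4 y = 0" "y \<noteq> 0" "g = pi y" by auto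
  obtain x where x: "x \<in> EE" "x \<noteq> 0" "g = pi x" using g R_eq by auto
  define l where "l = y * inverse x"
  have l: "l \<in> L" "l \<noteq> 0" using pi_eq[of y x] x y by (auto simp: l_def)
  have "y = l * x" using x by (simp add: l_def)
  hence "l * fin_trace L 4 x = 0" using y TrF_smul[OF l(1)] by simp
  hence "TrE x = 0" using l TrF_eq[OF x(1)] by simp
  thus "g \<in> pi ` (W - {0})" using x by (auto simp: W_def)
next
  fix g assume "g \<in> pi ` (W - {0})"
  then obtain w where w: "w \<in> W" "w \<noteq> 0" "g = pi w" by auto
  have "fin_trace L 4 w = 0" using w TrF_eq[of w] by (auto simp: W_def)
  moreover have "g \<in> R" using R_eq w W_E by auto
  ultimately show "g \<in> pi ` ({x. fin_trace L 4 x = 0} - {0}) \<inter> R" using w by auto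
qed

lemma pi_W_iff:
  assumes z: "z \<in> EE" "z \<noteq> 0" shows "pi z \<in> pi ` (W - {0}) \<longleftrightarrow> z \<in> W"
proof
  assume "pi z \<in> pi ` (W - {0})"
  then obtain w where w: "w \<in> W" "w \<noteq> 0" "pi z = pi w" by auto
  have wE: "w \<in> EE" using w W_E by auto
  have "z * inverse w \<in> L" using w z pi_eq by auto
  moreover have "z * inverse w \<in> EE" using z wE by (auto intro!: Fix_mult Fix_inv)
  ultimately have k: "z * inverse w \<in> KK" using EL by auto
  have "z = (z * inverse w) * w" using w by simp
  hence "TrE z = (z * inverse w) * TrE w" using k by (metis TrE_smul)
  thus "z \<in> W" using w z by (simp add: W_def)
qed (use z in auto)

lemma count_pairs:
  assumes g: "g \<in> R" "g \<noteq> pi 1"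
  shows "card {(d1, d2). d1 \<in> pi ` (W - {0}) \<and> d2 \<in> pi ` (W - {0}) \<and>
      d1 \<otimes>\<^bsub>GG\<lparr>carrier := R\<rparr>\<^esub> inv\<^bsub>GG\<lparr>carrier := R\<rparr>\<^esub> d2 = g} = (q ^ 2 - 1) div (q - 1)"
proof -
  obtain y where y: "y \<in> EE" "y \<noteq> 0" "g = pi y" using g R_eq by auto
  have yK: "y \<notin> KK" using pi_KK y g by auto
  define SS where "SS = pi ` (W - {0})"
  have SSR: "SS \<subseteq> R" using R_eq W_E by (auto simp: SS_def)
  have RG: "R \<subseteq> carrier GG" using Rsub subgroup.subset by blast
  have gG: "g \<in> carrier GG" using g RG by auto
  define XS where "XS = {w \<in> W - {0}. y * w \<in> W}"
  have "{(d1, d2). d1 \<in> SS \<and> d2 \<in> SS \<and>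
      d1 \<otimes>\<^bsub>GG\<lparr>carrier := R\<rparr>\<^esub> inv\<^bsub>GG\<lparr>carrier := R\<rparr>\<^esub> d2 = g}
      = (\<lambda>d. (g \<otimes>\<^bsub>GG\<^esub> d, d)) ` {d \<in> SS. g \<otimes>\<^bsub>GG\<^esub> d \<in> SS}"
  proof (intro equalityI subsetI)
    fix pr assume "pr \<in> {(d1, d2). d1 \<in> SS \<and> d2 \<in> SS \<and>
      d1 \<otimes>\<^bsub>GG\<lparr>carrier := R\<rparr>\<^esub> inv\<^bsub>GG\<lparr>carrier := R\<rparr>\<^esub> d2 = g}"
    then obtain d1 d2 where d: "pr = (d1, d2)" "d1 \<in> SS" "d2 \<in> SS"
      "d1 \<otimes>\<^bsub>GG\<^esub> inv\<^bsub>GG\<^esub> d2 = g"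
      using group.m_inv_consistent[OF grpG Rsub] SSR by auto
    hence "d1 = g \<otimes>\<^bsub>GG\<^esub> d2" using group.inv_solve_right'[OF grpG gG, of d1 d2] SSR RG by auto
    thus "pr \<in> (\<lambda>d. (g \<otimes>\<^bsub>GG\<^esub> d, d)) ` {d \<in> SS. g \<otimes>\<^bsub>GG\<^esub> d \<in> SS}" using d by auto
  next
    fix pr assume "pr \<in> (\<lambda>d. (g \<otimes>\<^bsub>GG\<^esub> d, d)) ` {d \<in> SS. g \<otimes>\<^bsub>GG\<^esub> d \<in> SS}"
    then obtain d where d: "pr = (g \<otimes>\<^bsub>GG\<^esub> d, d)" "d \<in> SS" "g \<otimes>\<^bsub>GG\<^esub> d \<in> SS" by auto
    have "(g \<otimes>\<^bsub>GG\<^esub> d) \<otimes>\<^bsub>GG\<^esub> inv\<^bsub>GG\<^esub> d = g"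
      using group.inv_solve_right'[OF grpG gG, of "g \<otimes>\<^bsub>GG\<^esub> d" d] d SSR RG by auto
    thus "pr \<in> {(d1, d2). d1 \<in> SS \<and> d2 \<in> SS \<and>
      d1 \<otimes>\<^bsub>GG\<lparr>carrier := R\<rparr>\<^esub> inv\<^bsub>GG\<lparr>carrier := R\<rparr>\<^esub> d2 = g}"
      using d group.m_inv_consistent[OF grpG Rsub] SSR by auto
  qed
  moreover have "inj_on (\<lambda>d. (g \<otimes>\<^bsub>GG\<^esub> d, d)) {d \<in> SS. g \<otimes>\<^bsub>GG\<^esub> d \<in> SS}"
    by (auto simp: inj_on_def)
  moreover have "{d \<in> SS. g \<otimes>\<^bsub>GG\<^esub> d \<in> SS} = pi ` XS"
  proof (intro equalityI subsetI)
    fix d assume d: "d \<in> {d \<in> SS. g \<otimes>\<^bsub>GG\<^esub> d \<in> SS}"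
    then obtain w where w: "w \<in> W" "w \<noteq> 0" "d = pi w" by (auto simp: SS_def)
    have "g \<otimes>\<^bsub>GG\<^esub> d = pi (y * w)" using w y pi_mult by simp
    moreover have yw: "y * w \<in> EE" "y * w \<noteq> 0" using y w W_E by (auto intro: Fix_mult)
    ultimately have "y * w \<in> W" using d pi_W_iff[OF yw] by (simp add: SS_def)
    thus "d \<in> pi ` XS" using w by (auto simp: XS_def)
  next
    fix d assume "d \<in> pi ` XS"
    then obtain w where w: "w \<in> W" "w \<noteq> 0" "y * w \<in> W" "d = pi w" by (auto simp: XS_def)
    have "g \<otimes>\<^bsub>GG\<^esub> d = pi (y * w)" using w y pi_mult by simp
    thus "d \<in> {d \<in> SS. g \<otimes>\<^bsub>GG\<^esub> d \<in> SS}" using w y by (auto simp: SS_def)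
  qed
  moreover have "card XS = (q - 1) * card (pi ` XS)"
    by (rule card_pi_img) (use W_E in \<open>auto simp: XS_def W_sm mult.left_commute[of y]\<close>)
  moreover have "card XS = q ^ 2 - 1"
  proof -
    have "XS = {x \<in> W. TrE (y * x) = 0} - {0}"
      using y W_E by (auto simp: XS_def W_def intro: Fix_mult)
    moreover have "0 \<in> {x \<in> W. TrE (y * x) = 0}" using W_0 TrE_0 by simp
    ultimately show ?thesis using cardWW[OF y(1) yK] by (simp add: card_Diff_singleton)
  qed
  ultimately show ?thesis using q2 by (simp add: card_image SS_def)
qed

end


context sing
begin

abbreviation "EG \<equiv> mult_grp EE Mod (KK - {0})"
definition cE :: "'a \<Rightarrow> 'a set" where "cE x = (KK - {0}) #>\<^bsub>mult_grp EE\<^esub> x"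
definition phi :: "'a set \<Rightarrow> 'a set" where "phi C = {l * c | l c. l \<in> Ls \<and> c \<in> C}"

lemma KK_normal: "(KK - {0}) \<lhd> mult_grp EE" by (rule mult_grp_normal[OF sfE sfK K_E])

lemma carrier_EG: "carrier EG = cE ` (EE - {0})"
  by (auto simp: FactGroup_def RCOSETS_def cE_def)

lemma cE_mult: "x \<in> EE - {0} \<Longrightarrow> y \<in> EE - {0} \<Longrightarrow> cE x \<otimes>\<^bsub>EG\<^esub> cE y = cE (x * y)"
  using normal.rcos_sum[OF KK_normal, of x y] by (simp add: cE_def FactGroup_def)

lemma phi_cE: "phi (cE x) = pi x"
proof (intro equalityI subsetI)
  fix z assume "z \<in> phi (cE x)"
  then obtain l k where "z = l * (k * x)" "l \<in> Ls" "k \<in> KK - {0}"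
    by (auto simp: phi_def cE_def rcos_mg)
  moreover hence "l * k \<in> Ls" using K_L Lsub by (auto simp: is_subfield_def)
  ultimately show "z \<in> pi x" by (auto simp: pi_def rcos_mg mult.assoc)
next
  fix z assume "z \<in> pi x"
  then obtain l where l: "z = l * x" "l \<in> Ls" by (auto simp: pi_def rcos_mg)
  have "x \<in> cE x" using Fix_1 unfolding cE_def rcos_mg by (intro image_eqI[of _ _ 1]) auto
  thus "z \<in> phi (cE x)" using l unfolding phi_def by blast
qed

lemma phi_iso: "phi \<in> iso EG (GG\<lparr>carrier := R\<rparr>)"
proof -
  have hom: "phi \<in> hom EG (GG\<lparr>carrier := R\<rparr>)"
  proof (rule homI)
    fix C assume "C \<in> carrier EG"
    then obtain x where "x \<in> EE - {0}" "C = cE x" using carrier_EG by auto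
    thus "phi C \<in> carrier (GG\<lparr>carrier := R\<rparr>)" using R_eq phi_cE by auto
  next
    fix C D assume "C \<in> carrier EG" "D \<in> carrier EG"
    then obtain x y where "x \<in> EE - {0}" "C = cE x" "y \<in> EE - {0}" "D = cE y" using carrier_EG by auto
    thus "phi (C \<otimes>\<^bsub>EG\<^esub> D) = phi C \<otimes>\<^bsub>GG\<lparr>carrier := R\<rparr>\<^esub> phi D"
      using cE_mult pi_mult phi_cE by simp
  qed
  have inj: "inj_on phi (carrier EG)"
  proof (rule inj_onI)
    fix C D assume CD: "C \<in> carrier EG" "D \<in> carrier EG" "phi C = phi D"
    obtain x where x: "x \<in> EE - {0}" "C = cE x" using CD(1) carrier_EG by auto
    obtain y where y: "y \<in> EE - {0}" "D = cE y" using CD(2) carrier_EG by auto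
    have xy: "x \<in> EE - {0}" "C = cE x" "y \<in> EE - {0}" "D = cE y" "pi x = pi y"
      using x y CD(3) phi_cE by auto
    hence "x * inverse y \<in> L" using pi_eq by auto
    moreover have "x * inverse y \<in> EE" using xy by (auto intro!: Fix_mult Fix_inv)
    ultimately have "x * inverse y \<in> KK" using EL by auto
    thus "C = D" using xy rcos_eq_iff[OF sfK, of x y "EE" "EE"] by (auto simp: cE_def)
  qed
  have "phi ` carrier EG = R" using carrier_EG R_eq by (auto simp: image_image phi_cE)
  thus ?thesis using hom inj by (simp add: iso_def bij_betw_def)
qed

lemma main:
  "singer_difference_set ((mult_grp (UNIV :: 'a set) Mod (L - {0})) \<lparr>carrier := R\<rparr>)
     ((\<lambda>x. (L - {0}) #>\<^bsub>mult_grp (UNIV :: 'a set)\<^esub> x) ` ({x. fin_trace L 4 x = 0} - {0}) \<inter> R)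
     ((q ^ 4 - 1) div (q - 1)) ((q ^ 3 - 1) div (q - 1)) ((q ^ 2 - 1) div (q - 1))"
proof -
  have pif: "(\<lambda>x. (L - {0}) #>\<^bsub>mult_grp (UNIV :: 'a set)\<^esub> x) = pi" by (simp add: fun_eq_iff pi_def)
  have S: "pi ` ({x. fin_trace L 4 x = 0} - {0}) \<inter> R = pi ` (W - {0})" by (rule S_eq)
  have SSR: "pi ` (W - {0}) \<subseteq> R" using R_eq W_E by auto
  have cardS: "card (pi ` (W - {0})) = (q ^ 3 - 1) div (q - 1)"
  proof -
    have "card (W - {0}) = (q - 1) * card (pi ` (W - {0}))"
      by (rule card_pi_img) (use W_E in \<open>auto simp: W_sm\<close>)
    moreover have "card (W - {0}) = q ^ 3 - 1" using cardW W_0 by (simp add: card_Diff_singleton)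
    ultimately show ?thesis using q2 by simp
  qed
  have ds: "difference_set (GG\<lparr>carrier := R\<rparr>) (pi ` (W - {0}))
      ((q ^ 4 - 1) div (q - 1)) ((q ^ 3 - 1) div (q - 1)) ((q ^ 2 - 1) div (q - 1))"
    unfolding difference_set_def
  proof (intro conjI ballI impI)
    show "group (GG\<lparr>carrier := R\<rparr>)" by (rule subgroup.subgroup_is_group[OF Rsub grpG])
    show "finite (carrier (GG\<lparr>carrier := R\<rparr>))" by simp
    show "card (carrier (GG\<lparr>carrier := R\<rparr>)) = (q ^ 4 - 1) div (q - 1)" using cardR by simp
    show "pi ` (W - {0}) \<subseteq> carrier (GG\<lparr>carrier := R\<rparr>)" using SSR by simp
    show "card (pi ` (W - {0})) = (q ^ 3 - 1) div (q - 1)" by (rule cardS)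
    fix g assume "g \<in> carrier (GG\<lparr>carrier := R\<rparr>)" "g \<noteq> \<one>\<^bsub>GG\<lparr>carrier := R\<rparr>\<^esub>"
    hence "g \<in> R" "g \<noteq> pi 1" by (simp_all add: pi1)
    thus "card {(d1, d2). d1 \<in> pi ` (W - {0}) \<and> d2 \<in> pi ` (W - {0}) \<and>
      d1 \<otimes>\<^bsub>GG\<lparr>carrier := R\<rparr>\<^esub> inv\<^bsub>GG\<lparr>carrier := R\<rparr>\<^esub> d2 = g} = (q ^ 2 - 1) div (q - 1)"
      by (rule count_pairs)
  qed
  have ex: "\<exists>(K::'a set) (E::'a set) (W'::'a set) (\<phi>::'a set \<Rightarrow> 'a set). is_subfield K \<and> is_subfield E \<and> K \<subseteq> E \<and> finite E \<and>
        is_hyperplane K E W' \<and>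
        \<phi> \<in> iso (mult_grp E Mod (K - {0})) (GG\<lparr>carrier := R\<rparr>) \<and>
        \<phi> ` ((\<lambda>x. (K - {0}) #>\<^bsub>mult_grp E\<^esub> x) ` (W' - {0})) = pi ` (W - {0})"
  proof (intro exI conjI)
    show "is_subfield KK" by (rule sfK)
    show "is_subfield EE" by (rule sfE)
    show "KK \<subseteq> EE" by (rule K_E)
    show "finite EE" by simp
    show "is_hyperplane KK EE W" by (rule hyper)
    show "phi \<in> iso EG (GG\<lparr>carrier := R\<rparr>)" by (rule phi_iso)
    show "phi ` ((\<lambda>x. (KK - {0}) #>\<^bsub>mult_grp EE\<^esub> x) ` (W - {0})) = pi ` (W - {0})"
      by (simp add: image_image phi_cE[unfolded cE_def])
  qed
  show ?thesis unfolding pif S singer_difference_set_def using ds ex by blast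
qed

end

theorem corollary3p2:
  fixes q s :: nat and L :: "'a::{field,finite} set" and R :: "'a set set"
  assumes "\<exists>p n. Factorial_Ring.prime (p::nat) \<and> n > 0 \<and> q = p ^ n"
    and "odd s" and "s > 0"
    and "is_subfield L" and "card L = q ^ s"
    and "card (UNIV :: 'a set) = q ^ (4 * s)"
    and "subgroup R (mult_grp (UNIV :: 'a set) Mod (L - {0}))"
    and "card R = (q ^ 4 - 1) div (q - 1)"
  shows "singer_difference_set
           ((mult_grp (UNIV :: 'a set) Mod (L - {0})) \<lparr>carrier := R\<rparr>)
           ((\<lambda>x. (L - {0}) #>\<^bsub>mult_grp (UNIV :: 'a set)\<^esub> x)
               ` ({x. fin_trace L 4 x = 0} - {0}) \<inter> R)
           ((q ^ 4 - 1) div (q - 1)) ((q ^ 3 - 1) div (q - 1)) ((q ^ 2 - 1) div (q - 1))"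
proof -
  obtain p n where pn: "Factorial_Ring.prime (p::nat)" "n > 0" "q = p ^ n" using assms(1) by blast
  interpret sing q s p n L R
    by (rule sing.intro[OF pn assms(2-8)])
  show ?thesis by (rule main)
qed

end
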